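(* Let $\mathcal{U}$ be a subspace of $\mathbb{R}^n$. If $u\circ u$ is strictly balanced for every nonzero $u\in\mathcal{U}$, then $\mathcal{U}$ is realizable.
   Context: $u\circ u$ denotes the entrywise square of $u\in\mathbb{R}^n$. A vector $w\in\mathbb{R}^n$ is strictly balanced if $|w_i|<\sum_{j\ne i}|w_j|$ for all $i$. A correlation matrix is a positive semidefinite matrix with unit diagonal; $\mathcal{U}$ is realizable if some $n\times n$ correlation matrix has nullspace containing $\mathcal{U}$. *)

theory Defs
  imports "HOL-Analysis.Analysis"
begin

definition hadamard_sq :: "real^'n \<Rightarrow> real^'n" where
  "hadamard_sq u = (\<chi> i. u $ i * u $ i)"

definition strictly_balanced :: "real^'n \<Rightarrow> bool" where
  "strictly_balanced w \<longleftrightarrow> (\<forall>i. \<bar>w $ i\<bar> < (\<Sum>j\<in>UNIV - {i}. \<bar>w $ j\<bar>))"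

definition psd_matrix :: "real^'n^'n \<Rightarrow> bool" where
  "psd_matrix C \<longleftrightarrow> transpose C = C \<and> (\<forall>x. 0 \<le> x \<bullet> (C *v x))"

definition correlation_matrix :: "real^'n^'n \<Rightarrow> bool" where
  "correlation_matrix C \<longleftrightarrow> psd_matrix C \<and> (\<forall>i. C $ i $ i = 1)"

definition null_space :: "real^'n^'n \<Rightarrow> (real^'n) set" where
  "null_space C = {x. C *v x = 0}"

definition realizable :: "(real^'n) set \<Rightarrow> bool" where
  "realizable U \<longleftrightarrow> (\<exists>C. correlation_matrix C \<and> U \<subseteq> null_space C)"

end

theory Submission imports Defs begin

lemma onb_expand:
  fixes B :: "(real^'n) set"
  assumes fin: "finite B" and orth: "pairwise orthogonal B" and nrm: "\<And>x. x \<in> B \<Longrightarrow> norm x = 1"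
    and x: "x \<in> span B"
  shows "(\<Sum>b\<in>B. (b \<bullet> x) *\<^sub>R b) = x"
proof -
  show ?thesis
    using x
  proof (induction rule: span_induct)
    case (step y)
    have "(\<Sum>b\<in>B. (b \<bullet> y) *\<^sub>R b) = (\<Sum>b\<in>B. (if b = y then y else 0))"
    proof (rule sum.cong)
      fix b assume "b \<in> B"
      show "(b \<bullet> y) *\<^sub>R b = (if b = y then y else 0)"
      proof (cases "b = y")
        case True
        then have "b \<bullet> y = 1" using nrm[OF step] by (simp add: dot_square_norm)
        then show ?thesis using True by simp
      next
        case False
        then have "b \<bullet> y = 0" using orth \<open>b \<in> B\<close> step unfolding pairwise_def orthogonal_def by blast
        then show ?thesis using False by simp
      qed
    qed simp
    also have "\<dots> = y" using fin step by (simp add: sum.delta')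
    finally show ?case by simp
  next
    case base
    show ?case unfolding subspace_def
    proof (auto simp: inner_add_right sum.distrib scaleR_add_left)
      fix c :: real and x :: "real^'n"
      assume h: "(\<Sum>b\<in>B. (b \<bullet> x) *\<^sub>R b) = x"
      have "(\<Sum>b\<in>B. (c * (b \<bullet> x)) *\<^sub>R b) = c *\<^sub>R (\<Sum>b\<in>B. (b \<bullet> x) *\<^sub>R b)"
        by (simp add: scaleR_sum_right)
      then show "(\<Sum>b\<in>B. (c * (b \<bullet> x)) *\<^sub>R b) = c *\<^sub>R x" using h by simp
    qed
  qed
qed


theorem corollary4p5:
  fixes U :: "(real^'n) set"
  assumes "subspace U"
    and "\<And>u. u \<in> U \<Longrightarrow> u \<noteq> 0 \<Longrightarrow> strictly_balanced (hadamard_sq u)"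
  shows "realizable U"
proof -
  obtain B where BU: "B \<subseteq> U" and orth: "pairwise orthogonal B"
    and nrm: "\<And>x. x \<in> B \<Longrightarrow> norm x = 1" and ind: "independent B" and spB: "span B = U"
    using orthonormal_basis_subspace[OF assms(1)] by metis
  have finB: "finite B" using ind independent_imp_finite by blast
  have PU: "\<And>x. x \<in> U \<Longrightarrow> (\<Sum>b\<in>B. (b \<bullet> x) *\<^sub>R b) = x"
    using onb_expand[OF finB orth nrm] spB by blast
  have Bin: "\<And>b c. b \<in> B \<Longrightarrow> c \<in> B \<Longrightarrow> b \<bullet> c = (if b = c then 1 else 0)"
  proof -
    fix b c assume b: "b \<in> B" and c: "c \<in> B"
    show "b \<bullet> c = (if b = c then 1 else 0)"
    proof (cases "b = c")
      case True then show ?thesis using nrm[OF b] by (simp add: dot_square_norm)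
    next
      case False then show ?thesis using orth b c unfolding pairwise_def orthogonal_def by auto
    qed
  qed
  define Q where "Q j k = (\<Sum>b\<in>B. b$j * b$k)" for j k :: 'n
  define a where "a j = Q j j" for j
  define uu where "uu j = (\<Sum>b\<in>B. (b$j) *\<^sub>R b)" for j :: 'n
  have uuU: "uu j \<in> U" for j
  proof -
    have "uu j \<in> span B" unfolding uu_def
      by (intro span_sum span_scale span_base) auto
    then show ?thesis using spB by simp
  qed
  have uucomp: "uu j $ k = Q j k" for j k
    by (simp add: uu_def Q_def)
  have binuu: "b \<bullet> uu j = b $ j" if "b \<in> B" for b j
  proof -
    have "b \<bullet> uu j = (\<Sum>c\<in>B. c$j * (b \<bullet> c))" unfolding uu_def
      by (simp add: inner_sum_right)
    also have "\<dots> = (\<Sum>c\<in>B. if c = b then b$j else 0)"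
      by (rule sum.cong) (use that Bin in auto)
    also have "\<dots> = b $ j" using finB that by (simp add: sum.delta')
    finally show ?thesis .
  qed
  have uuuu: "uu j \<bullet> uu j = a j" for j
  proof -
    have "uu j \<bullet> uu j = (\<Sum>b\<in>B. b$j * (b \<bullet> uu j))"
      unfolding uu_def[of j] by (simp add: inner_sum_left)
    also have "\<dots> = (\<Sum>b\<in>B. b$j * b$j)" by (rule sum.cong) (auto simp: binuu)
    finally show ?thesis by (simp add: a_def Q_def)
  qed
  have sumQ: "(\<Sum>k\<in>UNIV. Q j k * Q j k) = a j" for j
    using uuuu[of j] by (simp add: inner_vec_def uucomp)
  have a0: "0 \<le> a j" for j
    using uuuu[of j] by (metis inner_ge_zero)
  have ahalf: "a j < 1/2" for j
  proof (cases "uu j = 0")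
    case True then show ?thesis using uuuu[of j] by simp
  next
    case False
    have sb: "strictly_balanced (hadamard_sq (uu j))" using assms(2) uuU False by blast
    then have "\<bar>Q j j * Q j j\<bar> < (\<Sum>k\<in>UNIV - {j}. \<bar>Q j k * Q j k\<bar>)"
      unfolding strictly_balanced_def hadamard_sq_def by (simp add: uucomp)
    also have "\<dots> = (\<Sum>k\<in>UNIV - {j}. Q j k * Q j k)" by simp
    also have "\<dots> = a j - Q j j * Q j j"
      using sumQ[of j] sum.remove[of UNIV j "\<lambda>k. Q j k * Q j k"] by simp
    finally have "a j * a j < a j - a j * a j" by (simp add: a_def)
    show ?thesis
    proof (rule ccontr)
      assume "\<not> a j < 1/2"
      then have "a j * 1 \<le> a j * (2 * a j)" using a0[of j] by (intro mult_left_mono) auto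
      then show False using \<open>a j * a j < a j - a j * a j\<close> by simp
    qed
  qed
  define w where "w k = (\<chi> j. (if j = k then 1 else 0) - Q j k)" for k :: 'n
  have wperp: "w k \<bullet> x = 0" if "x \<in> U" for k x
  proof -
    have "(\<Sum>j\<in>UNIV. Q j k * x$j) = (\<Sum>b\<in>B. b$k * (b \<bullet> x))"
      unfolding Q_def inner_vec_def
      by (simp add: sum_distrib_left sum_distrib_right sum.swap[of _ UNIV B] ac_simps)
    also have "\<dots> = (\<Sum>b\<in>B. (b \<bullet> x) *\<^sub>R b) $ k" by (simp add: ac_simps)
    also have "\<dots> = x $ k" using PU[OF that] by simp
    finally have h: "(\<Sum>j\<in>UNIV. Q j k * x$j) = x $ k" .
    have "w k \<bullet> x = (\<Sum>j\<in>UNIV. (if j = k then x$j else 0)) - (\<Sum>j\<in>UNIV. Q j k * x$j)"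
    proof -
      have "w k \<bullet> x = (\<Sum>j\<in>UNIV. (if j = k then x$j else 0) - Q j k * x$j)"
        unfolding w_def inner_vec_def by (rule sum.cong) (auto simp: left_diff_distrib)
      then show ?thesis by (simp add: sum_subtractf)
    qed
    then show ?thesis using h by simp
  qed
  define S where "S j k = (w k $ j)^2" for j k
  have Sjj: "S j j = (1 - a j)^2" for j by (simp add: S_def w_def a_def)
  have Sjk: "k \<noteq> j \<Longrightarrow> S j k = Q j k * Q j k" for j k by (simp add: S_def w_def power2_eq_square)
  have sumS: "(\<Sum>k\<in>UNIV - {j}. S j k) = a j - a j * a j" for j
  proof -
    have "(\<Sum>k\<in>UNIV - {j}. S j k) = (\<Sum>k\<in>UNIV - {j}. Q j k * Q j k)"
      by (rule sum.cong) (auto simp: Sjk)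
    also have "\<dots> = a j - Q j j * Q j j"
      using sumQ[of j] sum.remove[of UNIV j "\<lambda>k. Q j k * Q j k"] by simp
    finally show ?thesis by (simp add: a_def)
  qed
  have Snn: "0 \<le> S j k" for j k by (simp add: S_def)
  have Sjjpos: "1/4 < S j j" for j
  proof -
    have "1/2 < 1 - a j" using ahalf[of j] by simp
    then have "(1/2)^2 < (1 - a j)^2" by (intro power_strict_mono) auto
    then show ?thesis by (simp add: Sjj power2_eq_square)
  qed
  define T where "T f = (\<chi> j. (1 - (\<Sum>k\<in>UNIV - {j}. S j k * f$k)) / S j j)" for f :: "real^'n"
  define box where "box = cbox (0::real^'n) (\<chi> k. 4)"
  have inbox: "f \<in> box \<longleftrightarrow> (\<forall>k. 0 \<le> f$k \<and> f$k \<le> 4)" for f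
    by (simp add: box_def mem_box_cart)
  have contT: "continuous_on box T"
  proof -
    have "S j j \<noteq> 0" for j using Sjjpos[of j] by linarith
    then show ?thesis unfolding T_def by (intro continuous_on_vec_lambda continuous_intros) auto
  qed
  have Tmaps: "T \<in> box \<rightarrow> box"
  proof
    fix f assume "f \<in> box"
    then have fb: "\<And>k. 0 \<le> f$k \<and> f$k \<le> 4" using inbox by blast
    show "T f \<in> box" unfolding inbox
    proof
      fix j
      have s0: "0 \<le> (\<Sum>k\<in>UNIV - {j}. S j k * f$k)"
        using fb Snn by (intro sum_nonneg) auto
      have "(\<Sum>k\<in>UNIV - {j}. S j k * f$k) \<le> (\<Sum>k\<in>UNIV - {j}. S j k * 4)"
        using fb Snn by (intro sum_mono mult_left_mono) auto
      also have "\<dots> = 4 * (a j - a j * a j)" using sumS[of j] by (simp add: sum_distrib_right[symmetric])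
      also have "\<dots> \<le> 1"
      proof -
        have h: "0 \<le> (2*a j - 1)*(2*a j - 1)" by simp
        then show ?thesis by (simp add: algebra_simps)
      qed
      finally have s1: "(\<Sum>k\<in>UNIV - {j}. S j k * f$k) \<le> 1" .
      have pos: "0 < S j j" using Sjjpos[of j] by linarith
      have "0 \<le> (1 - (\<Sum>k\<in>UNIV - {j}. S j k * f$k)) / S j j"
        using s1 pos by simp
      moreover have "(1 - (\<Sum>k\<in>UNIV - {j}. S j k * f$k)) / S j j \<le> 4"
        using s0 pos Sjjpos[of j] by (simp add: divide_le_eq)
      ultimately show "0 \<le> T f $ j \<and> T f $ j \<le> 4" by (simp add: T_def)
    qed
  qed
  obtain f where fbox: "f \<in> box" and fixT: "T f = f"
  proof -
    have ne: "box \<noteq> {}" using inbox[of 0] by auto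
    have "compact box" "convex box" unfolding box_def by (auto simp: compact_cbox convex_box)
    then show ?thesis using brouwer[OF _ _ ne contT Tmaps] that by blast
  qed
  have f0: "0 \<le> f $ k" for k using fbox inbox by blast
  have fS: "(\<Sum>k\<in>UNIV. S j k * f$k) = 1" for j
  proof -
    have "T f $ j = f $ j" using fixT by simp
    then have "(1 - (\<Sum>k\<in>UNIV - {j}. S j k * f$k)) / S j j = f $ j" by (simp add: T_def)
    moreover have "0 < S j j" using Sjjpos[of j] by linarith
    ultimately have "1 - (\<Sum>k\<in>UNIV - {j}. S j k * f$k) = S j j * f $ j"
      by (simp add: divide_eq_eq ac_simps)
    then show ?thesis using sum.remove[of UNIV j "\<lambda>k. S j k * f$k"] by simp
  qed
  define C where "C = (\<chi> i j. \<Sum>k\<in>UNIV. f$k * (w k $ i) * (w k $ j))"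
  have Cv: "C *v x = (\<Sum>k\<in>UNIV. (f$k * (w k \<bullet> x)) *\<^sub>R w k)" for x
  proof -
    have "(C *v x) $ i = (\<Sum>k\<in>UNIV. (f$k * (w k \<bullet> x)) * w k $ i)" for i
    proof -
      have "(C *v x) $ i = (\<Sum>j\<in>UNIV. \<Sum>k\<in>UNIV. f$k * w k$i * w k$j * x$j)"
        by (simp add: C_def matrix_vector_mult_def sum_distrib_right)
      also have "\<dots> = (\<Sum>k\<in>UNIV. \<Sum>j\<in>UNIV. f$k * w k$i * w k$j * x$j)"
        by (rule sum.swap)
      also have "\<dots> = (\<Sum>k\<in>UNIV. (f$k * (w k \<bullet> x)) * w k $ i)"
        by (rule sum.cong[OF refl]) (simp add: inner_vec_def sum_distrib_left sum_distrib_right mult_ac)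
      finally show ?thesis .
    qed
    then show ?thesis by (simp add: vec_eq_iff)
  qed
  have "correlation_matrix C"
    unfolding correlation_matrix_def psd_matrix_def
  proof (intro conjI allI)
    show "transpose C = C"
      by (simp add: C_def transpose_def vec_eq_iff ac_simps)
  next
    fix x :: "real^'n"
    have "x \<bullet> (C *v x) = (\<Sum>k\<in>UNIV. f$k * (w k \<bullet> x) * (w k \<bullet> x))"
      by (simp add: Cv inner_sum_right inner_commute)
    also have "\<dots> \<ge> 0" using f0 by (intro sum_nonneg) (simp add: mult.assoc)
    finally show "0 \<le> x \<bullet> (C *v x)" .
  next
    fix i
    have "C $ i $ i = (\<Sum>k\<in>UNIV. S i k * f$k)"
      by (simp add: C_def S_def power2_eq_square ac_simps)
    then show "C $ i $ i = 1" using fS by simp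
  qed
  moreover have "U \<subseteq> null_space C"
    unfolding null_space_def using wperp by (auto simp: Cv)
  ultimately show ?thesis unfolding realizable_def by blast
qed

end
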